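(* Let $x_1,\dots,x_N \in [-1,1]^d$ with labels $y_1,\dots,y_N \in \{-1,1\}$, let $\lambda > 0$, and let $F(\beta) = \frac{1}{N}\sum_{i=1}^N \max(0, 1 - y_i \beta\cdot x_i) + \lambda\|\beta\|_2^2$, with $\beta^* = \arg\min_{\beta\in\mathbb{R}^d} F(\beta)$. Let $\mathcal K$ be the ball of radius $\frac{\sqrt d}{2\lambda}$ centered at the origin. Starting from $\beta^{(0)} = 0$, perform projected gradient descent $\beta^{(t)} = \Pi_{\mathcal K}(\beta^{(t-1)} - \eta_t \nabla F(\beta^{(t-1)}))$ with $\eta_t = \frac{1}{8\lambda\sqrt{dt}}$, and let $\widehat\beta_s = \frac{1}{s}\sum_{t=0}^{s-1}\beta^{(t)}$. Then after $T-1$ iterations, $$F(\widehat\beta_T) - F(\beta^* ) \le \frac{4 d^{3/2}}{\lambda\sqrt T}.$$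
   Context: $\Pi_{\mathcal K}(\alpha) = \arg\min_{\beta\in\mathcal K}\|\alpha-\beta\|_2$. The gradient used is $\nabla F(\beta) = 2\lambda\beta - \frac{1}{N}\sum_{i:\ y_i\beta\cdot x_i \le 1} y_i x_i$ (the subgradient that counts points lying exactly on the hinge). *)

theory Defs
  imports "HOL-Analysis.Analysis"
begin

definition svm_obj :: "nat \<Rightarrow> (nat \<Rightarrow> real^'d) \<Rightarrow> (nat \<Rightarrow> real) \<Rightarrow> real \<Rightarrow> real^'d \<Rightarrow> real" where
  "svm_obj N x y lam \<beta> =
     (1 / real N) * (\<Sum>i<N. max 0 (1 - y i * (\<beta> \<bullet> x i))) + lam * (norm \<beta>)\<^sup>2"

definition svm_grad :: "nat \<Rightarrow> (nat \<Rightarrow> real^'d) \<Rightarrow> (nat \<Rightarrow> real) \<Rightarrow> real \<Rightarrow> real^'d \<Rightarrow> real^'d" where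
  "svm_grad N x y lam \<beta> =
     (2 * lam) *\<^sub>R \<beta> - (1 / real N) *\<^sub>R (\<Sum>i\<in>{i. i < N \<and> y i * (\<beta> \<bullet> x i) \<le> 1}. y i *\<^sub>R x i)"

definition svm_ball :: "real \<Rightarrow> (real^'d) set" where
  "svm_ball lam = cball 0 (sqrt (real CARD('d)) / (2 * lam))"

definition svm_step :: "real \<Rightarrow> nat \<Rightarrow> nat \<Rightarrow> real" where
  "svm_step lam d t = 1 / (8 * lam * sqrt (real d * real t))"

primrec svm_pgd :: "nat \<Rightarrow> (nat \<Rightarrow> real^'d) \<Rightarrow> (nat \<Rightarrow> real) \<Rightarrow> real \<Rightarrow> nat \<Rightarrow> real^'d" where
  "svm_pgd N x y lam 0 = 0"
| "svm_pgd N x y lam (Suc t) =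
     closest_point (svm_ball lam)
       (svm_pgd N x y lam t - svm_step lam CARD('d) (Suc t) *\<^sub>R svm_grad N x y lam (svm_pgd N x y lam t))"

definition svm_avg :: "nat \<Rightarrow> (nat \<Rightarrow> real^'d) \<Rightarrow> (nat \<Rightarrow> real) \<Rightarrow> real \<Rightarrow> nat \<Rightarrow> real^'d" where
  "svm_avg N x y lam s = (1 / real s) *\<^sub>R (\<Sum>t<s. svm_pgd N x y lam t)"

end

theory Submission
  imports Defs
begin

lemma norm_x_le:
  fixes v :: "real^'d"
  assumes "\<forall>j. \<bar>v $ j\<bar> \<le> 1"
  shows "norm v \<le> sqrt (real CARD('d))"
proof -
  have "(norm v)\<^sup>2 = (\<Sum>j\<in>UNIV. v $ j * v $ j)"
    by (simp add: power2_norm_eq_inner inner_vec_def)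
  also have "\<dots> \<le> (\<Sum>j\<in>(UNIV::'d set). 1)"
  proof (rule sum_mono)
    fix j :: 'd
    have "\<bar>v $ j\<bar> * \<bar>v $ j\<bar> \<le> 1 * 1" using assms by (intro mult_mono) auto
    then show "v $ j * v $ j \<le> 1" by (simp add: abs_mult[symmetric])
  qed
  also have "\<dots> = real CARD('d)" by simp
  finally show ?thesis by (simp add: real_le_rsqrt)
qed

lemma svm_subgrad:
  assumes "lam \<ge> 0"
  shows "svm_obj N x y lam b + svm_grad N x y lam b \<bullet> (b' - b) + lam * (norm (b' - b))\<^sup>2
         \<le> svm_obj N x y lam b'"
proof -
  define S where "S = {i. i < N \<and> y i * (b \<bullet> x i) \<le> 1}"
  have S: "S \<subseteq> {..<N}" unfolding S_def by auto
  have gi: "svm_grad N x y lam b \<bullet> (b' - b) = 2 * lam * (b \<bullet> (b' - b))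
      - (1 / real N) * (\<Sum>i<N. if y i * (b \<bullet> x i) \<le> 1 then y i * (x i \<bullet> (b' - b)) else 0)"
  proof -
    have "(\<Sum>i\<in>S. y i *\<^sub>R x i) \<bullet> (b' - b) = (\<Sum>i\<in>S. y i * (x i \<bullet> (b' - b)))"
      by (simp add: inner_sum_left)
    also have "\<dots> = (\<Sum>i<N. if y i * (b \<bullet> x i) \<le> 1 then y i * (x i \<bullet> (b' - b)) else 0)"
      unfolding S_def by (simp add: sum.If_cases Int_def lessThan_def conj_commute)
    finally show ?thesis unfolding svm_grad_def S_def[symmetric]
      by (simp add: inner_diff_left)
  qed
  have h: "(\<Sum>i<N. max 0 (1 - y i * (b \<bullet> x i))) - (\<Sum>i<N. if y i * (b \<bullet> x i) \<le> 1 then y i * (x i \<bullet> (b' - b)) else 0)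
      \<le> (\<Sum>i<N. max 0 (1 - y i * (b' \<bullet> x i)))"
    unfolding sum_subtractf[symmetric]
  proof (rule sum_mono)
    fix i
    have e: "b' \<bullet> x i = b \<bullet> x i + x i \<bullet> (b' - b)" by (simp add: inner_diff_right inner_commute)
    show "max 0 (1 - y i * (b \<bullet> x i)) - (if y i * (b \<bullet> x i) \<le> 1 then y i * (x i \<bullet> (b' - b)) else 0)
        \<le> max 0 (1 - y i * (b' \<bullet> x i))"
      unfolding e by (auto simp: algebra_simps)
  qed
  have r: "(norm b')\<^sup>2 = (norm b)\<^sup>2 + 2 * (b \<bullet> (b' - b)) + (norm (b' - b))\<^sup>2"
    by (simp add: power2_norm_eq_inner inner_diff_left inner_diff_right inner_commute algebra_simps)
  have "(1 / real N) * ((\<Sum>i<N. max 0 (1 - y i * (b \<bullet> x i))) - (\<Sum>i<N. if y i * (b \<bullet> x i) \<le> 1 then y i * (x i \<bullet> (b' - b)) else 0))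
      \<le> (1 / real N) * (\<Sum>i<N. max 0 (1 - y i * (b' \<bullet> x i)))"
    using h by (intro mult_left_mono) auto
  then show ?thesis unfolding svm_obj_def gi r
    by (simp add: algebra_simps)
qed


lemma grad_bound:
  fixes x :: "nat \<Rightarrow> real^'d"
  assumes xb: "\<forall>i<N. \<forall>j. \<bar>x i $ j\<bar> \<le> 1" and yb: "\<forall>i<N. y i \<in> {-1, 1}" and lam: "lam > 0"
    and bK: "norm b \<le> sqrt (real CARD('d)) / (2 * lam)"
  shows "norm (svm_grad N x y lam b) \<le> 2 * sqrt (real CARD('d))"
proof -
  define S where "S = {i. i < N \<and> y i * (b \<bullet> x i) \<le> 1}"
  let ?s = "sqrt (real CARD('d))"
  have cS: "card S \<le> N" unfolding S_def
    by (metis (no_types, lifting) card_lessThan card_mono finite_lessThan lessThan_iff mem_Collect_eq subsetI)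
  have "norm (\<Sum>i\<in>S. y i *\<^sub>R x i) \<le> (\<Sum>i\<in>S. norm (y i *\<^sub>R x i))" by (rule norm_sum)
  also have "\<dots> \<le> (\<Sum>i\<in>S. ?s)"
  proof (rule sum_mono)
    fix i assume "i \<in> S"
    then have "i < N" unfolding S_def by auto
    then have "\<bar>y i\<bar> = 1" "norm (x i) \<le> ?s" using yb xb norm_x_le[of "x i"] by auto
    then show "norm (y i *\<^sub>R x i) \<le> ?s" by simp
  qed
  also have "\<dots> = card S * ?s" by simp
  finally have n1: "norm (\<Sum>i\<in>S. y i *\<^sub>R x i) \<le> card S * ?s" .
  have "(1 / real N) * norm (\<Sum>i\<in>S. y i *\<^sub>R x i) \<le> ?s"
  proof (cases "N = 0")
    case True then show ?thesis by simp
  next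
    case False
    have "(1 / real N) * norm (\<Sum>i\<in>S. y i *\<^sub>R x i) \<le> (1 / real N) * (card S * ?s)"
      using n1 by (intro mult_left_mono) auto
    also have "\<dots> \<le> (1 / real N) * (N * ?s)"
      using cS by (intro mult_left_mono mult_right_mono) auto
    also have "\<dots> = ?s" using False by simp
    finally show ?thesis .
  qed
  moreover have "norm ((2 * lam) *\<^sub>R b) \<le> ?s"
  proof -
    have "2 * lam * norm b \<le> 2 * lam * (?s / (2 * lam))" using bK lam by (intro mult_left_mono) auto
    then show ?thesis using lam by simp
  qed
  moreover have "norm (svm_grad N x y lam b) \<le> norm ((2 * lam) *\<^sub>R b) + norm ((1 / real N) *\<^sub>R (\<Sum>i\<in>S. y i *\<^sub>R x i))"
    unfolding svm_grad_def S_def[symmetric] by (rule norm_triangle_ineq4)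
  moreover have "norm ((1 / real N) *\<^sub>R (\<Sum>i\<in>S. y i *\<^sub>R x i)) = (1 / real N) * norm (\<Sum>i\<in>S. y i *\<^sub>R x i)"
    by simp
  ultimately show ?thesis by linarith
qed

lemma key_ineq:
  fixes lam d D G2 :: real and n :: nat
  assumes lam: "lam > 0" and d: "d \<ge> 1" and D: "0 \<le> D" "D \<le> d / lam\<^sup>2" and G: "0 \<le> G2" "G2 \<le> 4 * d"
  shows "D * (4 * lam * sqrt (d * (n+1)) - 4 * lam * sqrt (d * n) - lam)
        + 1 / (8 * lam * sqrt (d * (n+1))) * G2 / 2
       \<le> d / lam\<^sup>2 * (4 * lam * sqrt (d * (n+1)) - 4 * lam * sqrt (d * n))"
proof -
  define s where "s = sqrt d"
  define p where "p = sqrt (real n + 1)"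
  define q where "q = sqrt (real n)"
  have s1: "s \<ge> 1" using d unfolding s_def by simp
  have p1: "p \<ge> 1" unfolding p_def by simp
  have q0: "q \<ge> 0" unfolding q_def by simp
  have ds: "d = s\<^sup>2" unfolding s_def using d by simp
  have pq: "p \<ge> q" unfolding p_def q_def by simp
  have pq2: "p * q \<le> real n + 1/2"
  proof -
    have "p * q = sqrt (real n * (real n + 1))" unfolding p_def q_def by (simp add: real_sqrt_mult mult.commute)
    also have "\<dots> \<le> sqrt ((real n + 1/2)\<^sup>2)"
      by (rule real_sqrt_le_mono) (simp add: power2_eq_square algebra_simps)
    also have "\<dots> = real n + 1/2" by simp
    finally show ?thesis .
  qed
  have pp: "p * p = real n + 1" unfolding p_def by simp
  have A1: "sqrt (d * (n+1)) = s * p" unfolding s_def p_def by (simp add: real_sqrt_mult)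
  have A0: "sqrt (d * n) = s * q" unfolding s_def q_def by (simp add: real_sqrt_mult)
  define e where "e = 1 / (8 * lam * (s * p)) * G2 / 2"
  have e_le: "e \<le> s / (4 * lam * p)"
  proof -
    have "e \<le> 1 / (8 * lam * (s * p)) * (4 * s\<^sup>2) / 2"
      unfolding e_def using G ds lam s1 p1 by (intro divide_right_mono mult_left_mono) auto
    also have "\<dots> = s / (4 * lam * p)" using s1 lam p1 by (simp add: field_simps power2_eq_square)
    finally show ?thesis .
  qed
  have e1: "e \<le> d / lam"
  proof -
    have "s / (4 * lam * p) \<le> s / lam" using lam p1 s1 by (simp add: field_simps)
    also have "\<dots> \<le> s * s / lam" using lam s1 by (simp add: field_simps)
    finally show ?thesis using e_le ds by (simp add: power2_eq_square)
  qed
  define \<delta> where "\<delta> = 4 * lam * (s * p) - 4 * lam * (s * q)"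
  have dpos: "\<delta> \<ge> 0" unfolding \<delta>_def using lam s1 pq by (simp add: mult_left_mono)
  have e2: "e \<le> d / lam\<^sup>2 * \<delta>"
  proof -
    have h: "p * (p - q) \<ge> 1/2" using pq2 pp by (simp add: algebra_simps)
    have "d / lam\<^sup>2 * \<delta> = 4 * s^3 * (p - q) / lam" unfolding \<delta>_def ds using lam
      by (simp add: field_simps power2_eq_square power3_eq_cube)
    moreover have "s / (4 * lam * p) \<le> 4 * s^3 * (p - q) / lam"
    proof -
      have "s \<le> 16 * s^3 * (p * (p - q))"
      proof -
        have ss: "1 \<le> s * s" using s1 mult_mono[of 1 s 1 s] by simp
        have "s * 1 \<le> s * (s * s)" using ss s1 by (intro mult_left_mono) auto
        then have "s \<le> 8 * s^3" using s1 by (simp add: power3_eq_cube)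
        also have "\<dots> \<le> 16 * s^3 * (p * (p - q))" using h s1 by simp
        finally show ?thesis .
      qed
      then show ?thesis using lam p1 by (simp add: field_simps)
    qed
    ultimately show ?thesis using e_le by linarith
  qed
  have main: "D * (\<delta> - lam) + e \<le> d / lam\<^sup>2 * \<delta>"
  proof (cases "\<delta> \<ge> lam")
    case True
    have "D * (\<delta> - lam) \<le> d / lam\<^sup>2 * (\<delta> - lam)" using D True by (intro mult_right_mono) auto
    moreover have "d / lam\<^sup>2 * lam = d / lam" using lam by (simp add: power2_eq_square)
    ultimately show ?thesis using e1 by (simp add: right_diff_distrib)
  next
    case False
    then have "D * (\<delta> - lam) \<le> 0" using D by (simp add: mult_nonneg_nonpos)
    then show ?thesis using e2 by linarith
  qed
  then show ?thesis unfolding A1 A0 \<delta>_def e_def .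
qed


lemma exists_u:
  fixes x :: "nat \<Rightarrow> real^'d" and b :: "real^'d"
  assumes N: "N \<ge> 1" and xb: "\<forall>i<N. \<forall>j. \<bar>x i $ j\<bar> \<le> 1" and yb: "\<forall>i<N. y i \<in> {-1, 1}" and lam: "lam > 0"
  shows "\<exists>u \<in> svm_ball lam. svm_obj N x y lam u \<le> svm_obj N x y lam b"
proof (cases "norm b \<le> sqrt (real CARD('d)) / (2 * lam)")
  case True then show ?thesis unfolding svm_ball_def by (intro bexI[of _ b]) auto
next
  case False
  define s where "s = sqrt (real CARD('d))"
  define R where "R = s / (2 * lam)"
  define nb where "nb = norm b"
  define t where "t = R / nb"
  have R0: "R \<ge> 0" unfolding R_def s_def using lam by simp
  have nbR: "nb > R" using False unfolding nb_def R_def s_def by simp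
  then have nb0: "nb > 0" using R0 by simp
  have tnb: "t * nb = R" unfolding t_def using nb0 by simp
  have t1: "t \<le> 1" unfolding t_def using nbR nb0 by simp
  have sR: "s = 2 * lam * R" unfolding R_def using lam by simp
  have uK: "t *\<^sub>R b \<in> svm_ball lam"
  proof -
    have "norm (t *\<^sub>R b) = t * nb" unfolding nb_def t_def using R0 nb0 by simp
    then show ?thesis unfolding svm_ball_def using tnb by (simp add: R_def s_def)
  qed
  have hi: "max 0 (1 - y i * ((t *\<^sub>R b) \<bullet> x i)) \<le> max 0 (1 - y i * (b \<bullet> x i)) + (1 - t) * (nb * s)"
    if "i < N" for i
  proof -
    have "\<bar>y i\<bar> = 1" using yb that by auto
    moreover have "\<bar>b \<bullet> x i\<bar> \<le> nb * s"
    proof -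
      have "\<bar>b \<bullet> x i\<bar> \<le> norm b * norm (x i)" by (rule Cauchy_Schwarz_ineq2)
      also have "\<dots> \<le> nb * s" unfolding nb_def s_def
        using norm_x_le[of "x i"] xb that by (intro mult_left_mono) auto
      finally show ?thesis .
    qed
    ultimately have a: "\<bar>y i * (b \<bullet> x i)\<bar> \<le> nb * s" by (simp add: abs_mult)
    define a where "a = y i * (b \<bullet> x i)"
    have "(1 - t) * a \<le> (1 - t) * (nb * s)" using a t1 unfolding a_def by (intro mult_left_mono) auto
    moreover have "0 \<le> (1 - t) * (nb * s)" using a t1 by (intro mult_nonneg_nonneg) (auto simp: s_def nb_def)
    moreover have "1 - y i * ((t *\<^sub>R b) \<bullet> x i) = (1 - a) + (1 - t) * a"
      unfolding a_def by (simp add: algebra_simps)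
    ultimately show ?thesis unfolding a_def[symmetric] by linarith
  qed
  have hs: "(\<Sum>i<N. max 0 (1 - y i * ((t *\<^sub>R b) \<bullet> x i))) \<le> (\<Sum>i<N. max 0 (1 - y i * (b \<bullet> x i))) + N * ((1 - t) * (nb * s))"
  proof -
    have "(\<Sum>i<N. max 0 (1 - y i * ((t *\<^sub>R b) \<bullet> x i))) \<le> (\<Sum>i<N. max 0 (1 - y i * (b \<bullet> x i)) + (1 - t) * (nb * s))"
      using hi by (intro sum_mono) auto
    then show ?thesis by (simp add: sum.distrib)
  qed
  have hs2: "(1 / real N) * (\<Sum>i<N. max 0 (1 - y i * ((t *\<^sub>R b) \<bullet> x i))) \<le> (1 / real N) * (\<Sum>i<N. max 0 (1 - y i * (b \<bullet> x i))) + (1 - t) * (nb * s)"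
  proof -
    have "(1 / real N) * (\<Sum>i<N. max 0 (1 - y i * ((t *\<^sub>R b) \<bullet> x i))) \<le> (1 / real N) * ((\<Sum>i<N. max 0 (1 - y i * (b \<bullet> x i))) + N * ((1 - t) * (nb * s)))"
      using hs by (intro mult_left_mono) auto
    then show ?thesis using N by (simp add: distrib_left)
  qed
  have reg: "(norm (t *\<^sub>R b))\<^sup>2 = t\<^sup>2 * nb\<^sup>2" unfolding nb_def by (simp add: power_mult_distrib)
  have alg: "(1 - t) * (nb * s) + lam * (t\<^sup>2 * nb\<^sup>2) - lam * nb\<^sup>2 = - lam * (nb - R)\<^sup>2"
  proof -
    have "(1 - t) * (nb * s) = (nb - R) * s" using tnb by (simp add: algebra_simps)
    moreover have "t\<^sup>2 * nb\<^sup>2 = R\<^sup>2" using tnb by (metis power_mult_distrib)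
    ultimately show ?thesis unfolding sR by (simp add: algebra_simps power2_eq_square)
  qed
  have neg: "- lam * (nb - R)\<^sup>2 \<le> 0" using lam by simp
  have "svm_obj N x y lam (t *\<^sub>R b) \<le> svm_obj N x y lam b"
  proof -
    have "lam * (norm b)\<^sup>2 = lam * nb\<^sup>2" by (simp add: nb_def)
    then show ?thesis unfolding svm_obj_def reg using hs2 alg neg by linarith
  qed
  then show ?thesis using uK by blast
qed


theorem theorem6:
  fixes x :: "nat \<Rightarrow> real^'d" and y :: "nat \<Rightarrow> real" and lam :: real
    and N T :: nat and \<beta>star :: "real^'d"
  assumes "N \<ge> 1"
    and "\<forall>i<N. \<forall>j. \<bar>x i $ j\<bar> \<le> 1"
    and "\<forall>i<N. y i \<in> {-1, 1}"
    and "lam > 0"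
    and "\<forall>\<beta>. svm_obj N x y lam \<beta>star \<le> svm_obj N x y lam \<beta>"
    and "T \<ge> 1"
  shows "svm_obj N x y lam (svm_avg N x y lam T) - svm_obj N x y lam \<beta>star
           \<le> 4 * real CARD('d) powr (3/2) / (lam * sqrt (real T))"
proof -
  note N = assms(1) and xb = assms(2) and yb = assms(3) and lam = assms(4) and T1 = assms(6)
  define d where "d = real CARD('d)"
  define R where "R = sqrt d / (2 * lam)"
  define F where "F = svm_obj N x y lam"
  define g where "g = svm_grad N x y lam"
  define b where "b = svm_pgd N x y lam"
  have d1: "d \<ge> 1" unfolding d_def by simp
  have R0: "R \<ge> 0" unfolding R_def using lam d1 by simp
  have ballR: "(svm_ball lam :: (real^'d) set) = cball 0 R" unfolding svm_ball_def R_def d_def by simp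
  have cvx: "convex (svm_ball lam :: (real^'d) set)" "closed (svm_ball lam :: (real^'d) set)" "(svm_ball lam :: (real^'d) set) \<noteq> {}"
    unfolding ballR using R0 by auto
  obtain u where uK: "u \<in> svm_ball lam" and Fu: "F u \<le> F \<beta>star"
    using exists_u[OF N xb yb lam, of \<beta>star] unfolding F_def by blast
  have bK: "b t \<in> svm_ball lam" for t
  proof (cases t)
    case 0 then show ?thesis unfolding b_def ballR using R0 by simp
  next
    case (Suc t') then show ?thesis unfolding b_def using closest_point_in_set[OF cvx(2,3)] by simp
  qed
  have bR: "norm (b t) \<le> R" for t using bK[of t] unfolding ballR by simp
  have uR: "norm u \<le> R" using uK unfolding ballR by simp
  define D where "D t = (norm (b t - u))\<^sup>2" for t
  have D0: "0 \<le> D t" for t unfolding D_def by simp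
  have Dle: "D t \<le> d / lam\<^sup>2" for t
  proof -
    have "norm (b t - u) \<le> 2 * R" using bR[of t] uR norm_triangle_ineq4[of "b t" u] by linarith
    then have "(norm (b t - u))\<^sup>2 \<le> (2 * R)\<^sup>2" by (intro power_mono) auto
    also have "(2 * R)\<^sup>2 = d / lam\<^sup>2" unfolding R_def using lam d1 by (simp add: power_divide power_mult_distrib)
    finally show ?thesis unfolding D_def .
  qed
  have gb: "(norm (g (b t)))\<^sup>2 \<le> 4 * d" for t
  proof -
    have "norm (g (b t)) \<le> 2 * sqrt d" unfolding g_def d_def
      using grad_bound[OF xb yb lam] bR[of t] unfolding R_def d_def by blast
    then have "(norm (g (b t)))\<^sup>2 \<le> (2 * sqrt d)\<^sup>2" by (intro power_mono) auto
    then show ?thesis using d1 by (simp add: power_mult_distrib)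
  qed
  have step: "F (b t) - F u \<le> 4 * lam * sqrt (d * real (Suc t)) * (D t - D (Suc t)) - lam * D t
      + 1 / (8 * lam * sqrt (d * real (Suc t))) * (norm (g (b t)))\<^sup>2 / 2" for t
  proof -
    define \<eta> where "\<eta> = 1 / (8 * lam * sqrt (d * real (Suc t)))"
    have eta0: "\<eta> > 0" unfolding \<eta>_def using lam d1 by simp
    have bs: "b (Suc t) = closest_point (svm_ball lam) (b t - \<eta> *\<^sub>R g (b t))"
      unfolding b_def g_def \<eta>_def d_def by (simp add: svm_step_def)
    have "norm (b (Suc t) - u) \<le> norm ((b t - \<eta> *\<^sub>R g (b t)) - u)"
      using closest_point_lipschitz[OF cvx, of "b t - \<eta> *\<^sub>R g (b t)" u] closest_point_self[OF uK]
      unfolding bs dist_norm by simp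
    then have "D (Suc t) \<le> (norm ((b t - u) - \<eta> *\<^sub>R g (b t)))\<^sup>2"
      unfolding D_def by (intro power_mono) (auto simp: algebra_simps)
    also have "\<dots> = D t - 2 * \<eta> * (g (b t) \<bullet> (b t - u)) + \<eta>\<^sup>2 * (norm (g (b t)))\<^sup>2"
      unfolding D_def power2_norm_eq_inner by (simp add: inner_diff_left inner_diff_right inner_commute algebra_simps power2_eq_square)
    finally have h1: "2 * \<eta> * (g (b t) \<bullet> (b t - u)) \<le> D t - D (Suc t) + \<eta>\<^sup>2 * (norm (g (b t)))\<^sup>2" by linarith
    have inv: "1 / (2 * \<eta>) = 4 * lam * sqrt (d * real (Suc t))" unfolding \<eta>_def using lam d1 by simp
    have h2: "g (b t) \<bullet> (b t - u) \<le> (D t - D (Suc t)) / (2 * \<eta>) + \<eta> * (norm (g (b t)))\<^sup>2 / 2"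
    proof -
      have "g (b t) \<bullet> (b t - u) = (2 * \<eta> * (g (b t) \<bullet> (b t - u))) / (2 * \<eta>)" using eta0 by simp
      also have "\<dots> \<le> (D t - D (Suc t) + \<eta>\<^sup>2 * (norm (g (b t)))\<^sup>2) / (2 * \<eta>)"
        using h1 eta0 by (intro divide_right_mono) auto
      also have "\<dots> = (D t - D (Suc t)) / (2 * \<eta>) + \<eta> * (norm (g (b t)))\<^sup>2 / 2"
        using eta0 by (simp add: field_simps power2_eq_square)
      finally show ?thesis .
    qed
    have sg: "F (b t) + g (b t) \<bullet> (u - b t) + lam * (norm (u - b t))\<^sup>2 \<le> F u"
      unfolding F_def g_def using svm_subgrad[of lam] lam by simp
    have "lam * (norm (u - b t))\<^sup>2 = lam * D t" unfolding D_def by (simp add: norm_minus_commute)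
    moreover have "g (b t) \<bullet> (u - b t) = - (g (b t) \<bullet> (b t - u))" by (simp add: inner_diff_right)
    moreover have "(D t - D (Suc t)) / (2 * \<eta>) = 4 * lam * sqrt (d * real (Suc t)) * (D t - D (Suc t))"
      using inv by (metis times_divide_eq_left mult.commute mult_1)
    ultimately show ?thesis using sg h2 unfolding D_def[symmetric] \<eta>_def[symmetric] by linarith
  qed
  have claim: "(\<Sum>t<n. F (b t) - F u) + 4 * lam * sqrt (d * real n) * D n \<le> d / lam\<^sup>2 * (4 * lam * sqrt (d * real n))" for n
  proof (induction n)
    case 0 then show ?case by simp
  next
    case (Suc n)
    have k: "D n * (4 * lam * sqrt (d * (n+1)) - 4 * lam * sqrt (d * n) - lam)
        + 1 / (8 * lam * sqrt (d * (n+1))) * (norm (g (b n)))\<^sup>2 / 2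
       \<le> d / lam\<^sup>2 * (4 * lam * sqrt (d * (n+1)) - 4 * lam * sqrt (d * n))"
      by (rule key_ineq[OF lam d1 D0 Dle _ gb]) simp
    have "real (Suc n) = real n + 1" by simp
    then show ?case using Suc.IH step[of n] k by (simp add: algebra_simps)
  qed
  have cl: "(\<Sum>t<T. F (b t)) - real T * F u \<le> 4 * d * sqrt d * sqrt (real T) / lam"
  proof -
    have "0 \<le> 4 * lam * sqrt (d * real T) * D T" using lam d1 D0[of T] by simp
    moreover have "d / lam\<^sup>2 * (4 * lam * sqrt (d * real T)) = 4 * d * sqrt d * sqrt (real T) / lam"
      using lam by (simp add: real_sqrt_mult power2_eq_square field_simps)
    moreover have "(\<Sum>t<T. F (b t) - F u) = (\<Sum>t<T. F (b t)) - real T * F u"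
      by (simp add: sum_subtractf)
    ultimately show ?thesis using claim[of T] by linarith
  qed
  define a where "a = svm_avg N x y lam T"
  have Ta: "real T *\<^sub>R a = (\<Sum>t<T. b t)" unfolding a_def svm_avg_def b_def using T1 by simp
  have jen: "real T * F a \<le> (\<Sum>t<T. F (b t))"
  proof -
    have "F a + g a \<bullet> (b t - a) \<le> F (b t)" for t
    proof -
      have "F a + g a \<bullet> (b t - a) + lam * (norm (b t - a))\<^sup>2 \<le> F (b t)"
        unfolding F_def g_def using svm_subgrad[of lam] lam by simp
      moreover have "0 \<le> lam * (norm (b t - a))\<^sup>2" using lam by simp
      ultimately show ?thesis by linarith
    qed
    then have "(\<Sum>t<T. F a + g a \<bullet> (b t - a)) \<le> (\<Sum>t<T. F (b t))" by (intro sum_mono) auto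
    moreover have "(\<Sum>t<T. F a + g a \<bullet> (b t - a)) = real T * F a + g a \<bullet> ((\<Sum>t<T. b t) - real T *\<^sub>R a)"
      by (simp add: sum.distrib inner_sum_right inner_diff_right sum_subtractf inner_commute)
    ultimately show ?thesis unfolding Ta by simp
  qed
  have Tpos: "real T > 0" using T1 by simp
  have "real T * (F a - F u) \<le> 4 * d * sqrt d * sqrt (real T) / lam"
    using cl jen by (simp add: algebra_simps)
  then have "F a - F u \<le> 4 * d * sqrt d * sqrt (real T) / lam / real T"
  proof -
    assume h: "real T * (F a - F u) \<le> 4 * d * sqrt d * sqrt (real T) / lam"
    define C where "C = 4 * d * sqrt d * sqrt (real T) / lam"
    have "F a - F u \<le> C / real T" unfolding pos_le_divide_eq[OF Tpos] using h unfolding C_def by (simp add: mult.commute)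
    then show ?thesis unfolding C_def .
  qed
  also have "\<dots> = 4 * d * sqrt d / (lam * sqrt (real T))"
  proof -
    define r where "r = sqrt (real T)"
    have rT: "real T = r * r" unfolding r_def by simp
    have r0: "r > 0" unfolding r_def using Tpos by simp
    have "4 * d * sqrt d * r / lam / real T = 4 * d * sqrt d / (lam * r)" using r0 lam rT by (simp add: field_simps)
    then show ?thesis unfolding r_def .
  qed
  finally have fin: "F a - F u \<le> 4 * d * sqrt d / (lam * sqrt (real T))" .
  have dp: "d * sqrt d = d powr (3/2)"
  proof -
    have "d powr (3/2) = d powr (1 + 1/2)" by simp
    also have "\<dots> = d powr 1 * d powr (1/2)" by (rule powr_add)
    also have "\<dots> = d * sqrt d" using d1 by (simp add: powr_half_sqrt)
    finally show ?thesis by simp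
  qed
  have "4 * d * sqrt d = 4 * d powr (3/2)" using dp by simp
  then have fin2: "F a - F u \<le> 4 * d powr (3/2) / (lam * sqrt (real T))" using fin by (simp only: mult.assoc dp)
  show ?thesis using fin2 Fu unfolding F_def a_def d_def by linarith
qed

end
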